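(* Let $\tilde L$ be a minimum-size counterexample. Then every element $x\in\tilde L\setminus\{0_{\tilde L},1_{\tilde L}\}$ is incomparable with at least three elements of $\tilde L$.
   Context: For a poset $P$, $x$ upper covers $y$ if $y<x$ with nothing strictly between; join-irreducible: upper covers exactly one element. For $x\in P$, ${\uparrow}x=\{y: x\le y\}$. $0_{\tilde L}$, $1_{\tilde L}$ are the least and greatest elements. A counterexample is a finite lattice $L$ with $|L|>1$ in which every join-irreducible $j$ satisfies $|{\uparrow}j|>|L|/2$; a minimum-size counterexample is a counterexample $\tilde L$ such that no counterexample has fewer elements. *)

theory Defs
  imports Main
begin

definition is_lub :: "'a set \<Rightarrow> ('a \<Rightarrow> 'a \<Rightarrow> bool) \<Rightarrow> 'a \<Rightarrow> 'a \<Rightarrow> 'a \<Rightarrow> bool" where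
  "is_lub S le x y z \<longleftrightarrow> z \<in> S \<and> le x z \<and> le y z \<and>
     (\<forall>w\<in>S. le x w \<and> le y w \<longrightarrow> le z w)"

definition is_glb :: "'a set \<Rightarrow> ('a \<Rightarrow> 'a \<Rightarrow> bool) \<Rightarrow> 'a \<Rightarrow> 'a \<Rightarrow> 'a \<Rightarrow> bool" where
  "is_glb S le x y z \<longleftrightarrow> z \<in> S \<and> le z x \<and> le z y \<and>
     (\<forall>w\<in>S. le w x \<and> le w y \<longrightarrow> le w z)"

definition finite_lattice :: "'a set \<Rightarrow> ('a \<Rightarrow> 'a \<Rightarrow> bool) \<Rightarrow> bool" where
  "finite_lattice S le \<longleftrightarrow> finite S \<and> S \<noteq> {} \<and>
     (\<forall>x\<in>S. le x x) \<and>
     (\<forall>x\<in>S. \<forall>y\<in>S. le x y \<and> le y x \<longrightarrow> x = y) \<and>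
     (\<forall>x\<in>S. \<forall>y\<in>S. \<forall>z\<in>S. le x y \<and> le y z \<longrightarrow> le x z) \<and>
     (\<forall>x\<in>S. \<forall>y\<in>S. (\<exists>z. is_lub S le x y z) \<and> (\<exists>z. is_glb S le x y z))"

definition upper_covers :: "'a set \<Rightarrow> ('a \<Rightarrow> 'a \<Rightarrow> bool) \<Rightarrow> 'a \<Rightarrow> 'a \<Rightarrow> bool" where
  "upper_covers S le x y \<longleftrightarrow> x \<in> S \<and> y \<in> S \<and> le y x \<and> y \<noteq> x \<and>
     \<not> (\<exists>z\<in>S. le y z \<and> z \<noteq> y \<and> le z x \<and> z \<noteq> x)"

definition join_irreducible :: "'a set \<Rightarrow> ('a \<Rightarrow> 'a \<Rightarrow> bool) \<Rightarrow> 'a \<Rightarrow> bool" where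
  "join_irreducible S le j \<longleftrightarrow> j \<in> S \<and> card {y \<in> S. upper_covers S le j y} = 1"

definition up_set :: "'a set \<Rightarrow> ('a \<Rightarrow> 'a \<Rightarrow> bool) \<Rightarrow> 'a \<Rightarrow> 'a set" where
  "up_set S le x = {y \<in> S. le x y}"

definition counterexample :: "'a set \<Rightarrow> ('a \<Rightarrow> 'a \<Rightarrow> bool) \<Rightarrow> bool" where
  "counterexample S le \<longleftrightarrow> finite_lattice S le \<and> card S > 1 \<and>
     (\<forall>j\<in>S. join_irreducible S le j \<longrightarrow> 2 * card (up_set S le j) > card S)"

text \<open>Smaller counterexamples are quantified over
lattices carried by the same type; since such lattices have fewer elements than S,
every finite lattice of smaller size has an isomorphic copy on this type.\<close>
definition min_counterexample :: "'a set \<Rightarrow> ('a \<Rightarrow> 'a \<Rightarrow> bool) \<Rightarrow> bool" where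
  "min_counterexample S le \<longleftrightarrow> counterexample S le \<and>
     (\<forall>(S' :: 'a set) (le' :: 'a \<Rightarrow> 'a \<Rightarrow> bool). counterexample S' le' \<longrightarrow> card S \<le> card S')"

definition least_elem :: "'a set \<Rightarrow> ('a \<Rightarrow> 'a \<Rightarrow> bool) \<Rightarrow> 'a" where
  "least_elem S le = (THE z. z \<in> S \<and> (\<forall>y\<in>S. le z y))"

definition greatest_elem :: "'a set \<Rightarrow> ('a \<Rightarrow> 'a \<Rightarrow> bool) \<Rightarrow> 'a" where
  "greatest_elem S le = (THE z. z \<in> S \<and> (\<forall>y\<in>S. le y z))"

end

theory Submission imports Defs begin

lemma fl_facts:
  assumes "finite_lattice S le"
  shows "finite S" "S \<noteq> {}" "\<And>x. x\<in>S \<Longrightarrow> le x x"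
   "\<And>x y. x\<in>S \<Longrightarrow> y\<in>S \<Longrightarrow> le x y \<Longrightarrow> le y x \<Longrightarrow> x = y"
   "\<And>x y z. x\<in>S \<Longrightarrow> y\<in>S \<Longrightarrow> z\<in>S \<Longrightarrow> le x y \<Longrightarrow> le y z \<Longrightarrow> le x z"
   "\<And>x y. x\<in>S \<Longrightarrow> y\<in>S \<Longrightarrow> \<exists>z. is_lub S le x y z"
   "\<And>x y. x\<in>S \<Longrightarrow> y\<in>S \<Longrightarrow> \<exists>z. is_glb S le x y z"
  using assms unfolding finite_lattice_def by blast+

lemma least_ex:
  assumes fl: "finite_lattice S le" and "finite T" "T \<noteq> {}" "T \<subseteq> S"
  shows "\<exists>z\<in>S. \<forall>y\<in>T. le z y"
  using assms(2,3,4)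
proof (induction T rule: finite_ne_induct)
  case (singleton t) then show ?case using fl_facts(3)[OF fl] by auto
next
  case (insert t T)
  then obtain z where z: "z\<in>S" "\<forall>y\<in>T. le z y" by auto
  have tS: "t \<in> S" using insert.prems by auto
  obtain g where g: "is_glb S le t z g" using fl_facts(7)[OF fl, of t z] tS z by blast
  have gS: "g \<in> S" and g1: "le g t" and g2: "le g z" using g unfolding is_glb_def by auto
  have "\<forall>y\<in>insert t T. le g y"
  proof
    fix y assume "y \<in> insert t T"
    then show "le g y"
    proof
      assume "y = t" then show ?thesis using g1 by simp
    next
      assume "y \<in> T" then show ?thesis
        using fl_facts(5)[OF fl, of g z y] gS z g2 insert.prems by auto
    qed
  qed
  then show ?case using gS by auto
qed

lemma greatest_ex:
  assumes fl: "finite_lattice S le" and "finite T" "T \<noteq> {}" "T \<subseteq> S"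
  shows "\<exists>z\<in>S. \<forall>y\<in>T. le y z"
  using assms(2,3,4)
proof (induction T rule: finite_ne_induct)
  case (singleton t) then show ?case using fl_facts(3)[OF fl] by auto
next
  case (insert t T)
  then obtain z where z: "z\<in>S" "\<forall>y\<in>T. le y z" by auto
  have tS: "t \<in> S" using insert.prems by auto
  obtain g where g: "is_lub S le t z g" using fl_facts(6)[OF fl, of t z] tS z by blast
  have gS: "g \<in> S" and g1: "le t g" and g2: "le z g" using g unfolding is_lub_def by auto
  have "\<forall>y\<in>insert t T. le y g"
  proof
    fix y assume "y \<in> insert t T"
    then show "le y g"
    proof
      assume "y = t" then show ?thesis using g1 by simp
    next
      assume "y \<in> T" then show ?thesis
        using fl_facts(5)[OF fl, of y z g] gS z g2 insert.prems by auto
    qed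
  qed
  then show ?case using gS by auto
qed

lemma least_prop:
  assumes fl: "finite_lattice S le"
  shows "least_elem S le \<in> S \<and> (\<forall>y\<in>S. le (least_elem S le) y)"
proof -
  obtain z where z: "z\<in>S" "\<forall>y\<in>S. le z y" using least_ex[OF fl, of S] fl_facts(1,2)[OF fl] by blast
  have "\<exists>!z. z \<in> S \<and> (\<forall>y\<in>S. le z y)"
  proof (rule ex1I[of _ z])
    show "z \<in> S \<and> (\<forall>y\<in>S. le z y)" using z by blast
    fix w assume w: "w \<in> S \<and> (\<forall>y\<in>S. le w y)"
    show "w = z" using fl_facts(4)[OF fl, of w z] w z by blast
  qed
  then show ?thesis unfolding least_elem_def by (rule theI')
qed

lemma greatest_prop:
  assumes fl: "finite_lattice S le"
  shows "greatest_elem S le \<in> S \<and> (\<forall>y\<in>S. le y (greatest_elem S le))"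
proof -
  obtain z where z: "z\<in>S" "\<forall>y\<in>S. le y z" using greatest_ex[OF fl, of S] fl_facts(1,2)[OF fl] by blast
  have "\<exists>!z. z \<in> S \<and> (\<forall>y\<in>S. le y z)"
  proof (rule ex1I[of _ z])
    show "z \<in> S \<and> (\<forall>y\<in>S. le y z)" using z by blast
    fix w assume w: "w \<in> S \<and> (\<forall>y\<in>S. le y w)"
    show "w = z" using fl_facts(4)[OF fl, of w z] w z by blast
  qed
  then show ?thesis unfolding greatest_elem_def by (rule theI')
qed

lemma ji_crit:
  assumes antiA: "\<forall>a\<in>S. \<forall>b\<in>S. le a b \<and> le b a \<longrightarrow> a = b"
    and uS: "u\<in>S" and eS: "e\<in>S" and eu: "le e u" and enu: "e \<noteq> u"
    and below: "\<forall>v\<in>S. le v u \<and> v \<noteq> u \<longrightarrow> le v e"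
  shows "join_irreducible S le u"
proof -
  have ecov: "upper_covers S le u e"
    unfolding upper_covers_def
  proof (intro conjI uS eS eu)
    show "e \<noteq> u" by (rule enu)
    show "\<not> (\<exists>z\<in>S. le e z \<and> z \<noteq> e \<and> le z u \<and> z \<noteq> u)"
    proof
      assume "\<exists>z\<in>S. le e z \<and> z \<noteq> e \<and> le z u \<and> z \<noteq> u"
      then obtain z where z: "z\<in>S" "le e z" "z \<noteq> e" "le z u" "z \<noteq> u" by blast
      have "le z e" using below z by blast
      have "z = e" using antiA z(1) eS \<open>le z e\<close> z(2) by blast
      then show False using z(3) by blast
    qed
  qed
  have "{v\<in>S. upper_covers S le u v} = {e}"
  proof
    show "{v \<in> S. upper_covers S le u v} \<subseteq> {e}"
    proof
      fix v assume v: "v \<in> {v \<in> S. upper_covers S le u v}"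
      then have vS: "v\<in>S" "le v u" "v \<noteq> u" and nz: "\<not> (\<exists>z\<in>S. le v z \<and> z \<noteq> v \<and> le z u \<and> z \<noteq> u)"
        unfolding upper_covers_def by auto
      then have ve: "le v e" using below by blast
      have "v = e"
      proof (rule ccontr)
        assume "v \<noteq> e"
        then have "\<exists>z\<in>S. le v z \<and> z \<noteq> v \<and> le z u \<and> z \<noteq> u" using eS ve eu enu by blast
        then show False using nz by blast
      qed
      then show "v \<in> {e}" by simp
    qed
    show "{e} \<subseteq> {v \<in> S. upper_covers S le u v}"
      using ecov eS by blast
  qed
  then show ?thesis unfolding join_irreducible_def using uS by simp
qed

theorem corollary2p14:
  fixes S :: "'a set" and le :: "'a \<Rightarrow> 'a \<Rightarrow> bool"
  assumes "min_counterexample S le"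
  shows "\<forall>x \<in> S - {least_elem S le, greatest_elem S le}.
           card {y \<in> S. \<not> le x y \<and> \<not> le y x} \<ge> 3"
proof (rule ballI, rule ccontr)
  fix x assume xS': "x \<in> S - {least_elem S le, greatest_elem S le}"
  assume nI: "\<not> 3 \<le> card {y \<in> S. \<not> le x y \<and> \<not> le y x}"
  define I where "I = {y \<in> S. \<not> le x y \<and> \<not> le y x}"
  define A where "A = {y\<in>S. le y x}"
  define B where "B = {y\<in>S. le x y}"
  define bot where "bot = least_elem S le"
  define top where "top = greatest_elem S le"
  have ce: "counterexample S le" and minc: "\<And>(S'::'a set) le'. counterexample S' le' \<Longrightarrow> card S \<le> card S'"
    using assms unfolding min_counterexample_def by blast+
  have fl: "finite_lattice S le" using ce counterexample_def by auto
  have CE: "\<And>u. u \<in> S \<Longrightarrow> join_irreducible S le u \<Longrightarrow> 2 * card (up_set S le u) > card S"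
    using ce unfolding counterexample_def by auto
  note F = fl_facts[OF fl]
  have finS: "finite S" by (rule F(1))
  have refl: "\<And>u. u\<in>S \<Longrightarrow> le u u" by (rule F(3))
  have anti: "\<And>a b. a\<in>S \<Longrightarrow> b\<in>S \<Longrightarrow> le a b \<Longrightarrow> le b a \<Longrightarrow> a = b" by (rule F(4))
  have antiA: "\<forall>a\<in>S. \<forall>b\<in>S. le a b \<and> le b a \<longrightarrow> a = b" using anti by blast
  have trans: "\<And>a b c. a\<in>S \<Longrightarrow> b\<in>S \<Longrightarrow> c\<in>S \<Longrightarrow> le a b \<Longrightarrow> le b c \<Longrightarrow> le a c" by (rule F(5))
  define lub where "lub u v = (SOME z. is_lub S le u v z)" for u v
  define glb where "glb u v = (SOME z. is_glb S le u v z)" for u v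
  have lub: "is_lub S le u v (lub u v)" if "u\<in>S" "v\<in>S" for u v
    unfolding lub_def using F(6)[OF that] by (rule someI_ex)
  have glb: "is_glb S le u v (glb u v)" if "u\<in>S" "v\<in>S" for u v
    unfolding glb_def using F(7)[OF that] by (rule someI_ex)
  have lubS: "lub u v \<in> S" and lub1: "le u (lub u v)" and lub2: "le v (lub u v)"
    and lubl: "\<And>w. w\<in>S \<Longrightarrow> le u w \<Longrightarrow> le v w \<Longrightarrow> le (lub u v) w" if "u\<in>S" "v\<in>S" for u v
    using lub[OF that] unfolding is_lub_def by auto
  have glbS: "glb u v \<in> S" and glb1: "le (glb u v) u" and glb2: "le (glb u v) v"
    and glbl: "\<And>w. w\<in>S \<Longrightarrow> le w u \<Longrightarrow> le w v \<Longrightarrow> le w (glb u v)" if "u\<in>S" "v\<in>S" for u v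
    using glb[OF that] unfolding is_glb_def by auto
  have botp: "bot \<in> S" "\<And>u. u\<in>S \<Longrightarrow> le bot u" using least_prop[OF fl] bot_def by auto
  have topp: "top \<in> S" "\<And>u. u\<in>S \<Longrightarrow> le u top" using greatest_prop[OF fl] top_def by auto
  have xS: "x \<in> S" and xbot: "x \<noteq> bot" and xtop: "x \<noteq> top" using xS' bot_def top_def by auto
  have finI: "finite I" and finA: "finite A" and finB: "finite B"
    using finS unfolding I_def A_def B_def by auto
  have I2: "card I \<le> 2" using nI I_def by simp
  have three: False if "u\<in>I" "v\<in>I" "w\<in>I" "u\<noteq>v" "u\<noteq>w" "v\<noteq>w" for u v w
  proof -
    have "card {u,v,w} \<le> card I" using that finI by (intro card_mono) auto
    moreover have "card {u,v,w} = 3" using that by simp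
    ultimately show False using I2 by simp
  qed
  have A3: "card A \<ge> 3" if "u\<in>A" "v\<in>A" "w\<in>A" "u\<noteq>v" "u\<noteq>w" "v\<noteq>w" for u v w
  proof -
    have "card {u,v,w} \<le> card A" using that finA by (intro card_mono) auto
    moreover have "card {u,v,w} = 3" using that by simp
    ultimately show ?thesis by simp
  qed
  have A2: "card A \<ge> 2"
  proof -
    have "card {bot, x} \<le> card A" using finA botp xS refl A_def by (intro card_mono) auto
    then show ?thesis using xbot by simp
  qed
  have cardsum: "card A + card B + card I \<le> card S + 1"
  proof -
    have AB: "A \<inter> B = {x}" unfolding A_def B_def using xS refl[OF xS] anti[OF _ xS] by blast
    have "card (A \<union> B) + card (A \<inter> B) = card A + card B" using finA finB card_Un_Int by metis
    then have "card (A \<union> B) + 1 = card A + card B" using AB by simp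
    moreover have "card (A \<union> B \<union> I) = card (A \<union> B) + card I"
      using finA finB finI by (intro card_Un_disjoint) (auto simp: A_def B_def I_def)
    moreover have "card (A \<union> B \<union> I) \<le> card S"
      using finS by (intro card_mono) (auto simp: A_def B_def I_def)
    ultimately show ?thesis by simp
  qed
  have BS: "B \<subseteq> S" unfolding B_def by auto
  have flB: "finite_lattice B le"
    unfolding finite_lattice_def
  proof (intro conjI ballI)
    show "finite B" by (rule finB)
    show "B \<noteq> {}" using xS refl B_def by auto
    fix u assume uB: "u \<in> B"
    then show "le u u" using refl B_def by auto
    fix v assume vB: "v \<in> B"
    show "le u v \<and> le v u \<longrightarrow> u = v" using uB vB anti[of u v] B_def by auto
    show "\<exists>z. is_lub B le u v z"
    proof (intro exI)
      have uS: "u\<in>S" "le x u" and vS: "v\<in>S" "le x v" using uB vB B_def by auto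
      have "lub u v \<in> B" using trans[OF xS uS(1) lubS[OF uS(1) vS(1)] uS(2) lub1[OF uS(1) vS(1)]]
          lubS[OF uS(1) vS(1)] B_def by auto
      then show "is_lub B le u v (lub u v)" unfolding is_lub_def
        using lub1[OF uS(1) vS(1)] lub2[OF uS(1) vS(1)] lubl[OF uS(1) vS(1)] BS by auto
    qed
    show "\<exists>z. is_glb B le u v z"
    proof (intro exI)
      have uS: "u\<in>S" "le x u" and vS: "v\<in>S" "le x v" using uB vB B_def by auto
      have "glb u v \<in> B" using glbl[OF uS(1) vS(1) xS uS(2) vS(2)] glbS[OF uS(1) vS(1)] B_def by auto
      then show "is_glb B le u v (glb u v)" unfolding is_glb_def
        using glb1[OF uS(1) vS(1)] glb2[OF uS(1) vS(1)] glbl[OF uS(1) vS(1)] BS by auto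
    qed
  next
    fix u v w assume "u\<in>B" "v\<in>B" "w\<in>B"
    then show "le u v \<and> le v w \<longrightarrow> le u w" using trans[of u v w] B_def by auto
  qed
  have cardBS: "card B < card S"
  proof (rule psubset_card_mono[OF finS])
    have "bot \<notin> B" unfolding B_def using anti[OF xS botp(1)] botp xbot xS by blast
    then show "B \<subset> S" using BS botp by auto
  qed
  have cardB1: "card B > 1"
  proof -
    have "card {x, top} \<le> card B" using finB topp xS refl B_def by (intro card_mono) auto
    then show ?thesis using xtop by simp
  qed
  have "\<not> counterexample B le" using minc cardBS by fastforce
  then obtain j where jB: "j \<in> B" and jJI: "join_irreducible B le j"
    and jsmall: "\<not> 2 * card (up_set B le j) > card B"
    using flB cardB1 unfolding counterexample_def by auto
  have jS: "j \<in> S" and xj: "le x j" using jB B_def by auto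
  have upeq: "up_set B le j = up_set S le j"
    unfolding up_set_def B_def using trans[OF xS jS] xj by auto
  have upj: "2 * card (up_set S le j) \<le> card B" using jsmall upeq by simp
  obtain c where cset: "{y\<in>B. upper_covers B le j y} = {c}"
    using jJI card_1_singletonE unfolding join_irreducible_def by metis
  have cB: "c \<in> B" and cBc: "upper_covers B le j c" using cset by auto
  have cS: "c \<in> S" and xc: "le x c" using cB B_def by auto
  have cSc: "upper_covers S le j c"
  proof -
    have "\<not> (\<exists>z\<in>S. le c z \<and> z \<noteq> c \<and> le z j \<and> z \<noteq> j)"
    proof
      assume "\<exists>z\<in>S. le c z \<and> z \<noteq> c \<and> le z j \<and> z \<noteq> j"
      then obtain z where z: "z\<in>S" "le c z" "z \<noteq> c" "le z j" "z \<noteq> j" by auto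
      then have "z \<in> B" using trans[OF xS cS z(1) xc] B_def by auto
      then show False using cBc z unfolding upper_covers_def by auto
    qed
    then show ?thesis using cBc BS unfolding upper_covers_def by auto
  qed
  have notJIj: "\<not> join_irreducible S le j" using CE[OF jS] upj cardBS by auto
  have "card {y\<in>S. upper_covers S le j y} \<noteq> 1" using notJIj jS unfolding join_irreducible_def by auto
  moreover have "c \<in> {y\<in>S. upper_covers S le j y}" using cSc cS by auto
  ultimately have "\<exists>y\<in>{y\<in>S. upper_covers S le j y}. y \<noteq> c"
  proof -
    assume h1: "card {y\<in>S. upper_covers S le j y} \<noteq> 1" and h2: "c \<in> {y\<in>S. upper_covers S le j y}"
    show ?thesis
    proof (rule ccontr)
      assume "\<not> ?thesis"
      then have "{y\<in>S. upper_covers S le j y} = {c}" using h2 by blast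
      then show False using h1 by simp
    qed
  qed
  then obtain y where yS: "y \<in> S" and ycov: "upper_covers S le j y" and yc: "y \<noteq> c" by auto
  have nxy: "\<not> le x y"
  proof
    assume "le x y"
    then have "y \<in> B" using yS B_def by auto
    moreover have "upper_covers B le j y" using ycov \<open>y \<in> B\<close> jB BS unfolding upper_covers_def by auto
    ultimately show False using cset yc by auto
  qed
  have yj: "le y j" and yneqj: "y \<noteq> j"
    and ycov': "\<And>z. z\<in>S \<Longrightarrow> le y z \<Longrightarrow> z \<noteq> y \<Longrightarrow> le z j \<Longrightarrow> z = j"
    using ycov unfolding upper_covers_def by auto
  have nyx: "\<not> le y x"
  proof
    assume "le y x"
    then have "le y c" using trans[OF yS xS cS] xc by auto
    then have "c = j" using ycov'[OF cS] yc cSc unfolding upper_covers_def by auto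
    then show False using cSc unfolding upper_covers_def by auto
  qed
  have yI: "y \<in> I" using yS nxy nyx I_def by auto
  have jlub: "\<And>v. v\<in>S \<Longrightarrow> le x v \<Longrightarrow> le y v \<Longrightarrow> le j v"
  proof -
    have m: "lub x y = j"
    proof (rule ycov'[OF lubS[OF xS yS] lub2[OF xS yS]])
      show "lub x y \<noteq> y" using lub1[OF xS yS] nxy by auto
      show "le (lub x y) j" using lubl[OF xS yS jS xj yj] .
    qed
    fix v assume "v\<in>S" "le x v" "le y v"
    then show "le j v" using lubl[OF xS yS] m by auto
  qed
  have upbound: "card (up_set S le u) \<le> card (I \<inter> up_set S le u) + card (up_set S le j)"
    if uI: "u \<in> I" and P: "\<And>v. v\<in>S \<Longrightarrow> le x v \<Longrightarrow> le u v \<Longrightarrow> le j v" for u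
  proof -
    have uS: "u \<in> S" using uI I_def by auto
    have "up_set S le u \<subseteq> (I \<inter> up_set S le u) \<union> up_set S le j"
    proof
      fix v assume v: "v \<in> up_set S le u"
      then have vS: "v \<in> S" and uv: "le u v" unfolding up_set_def by auto
      show "v \<in> (I \<inter> up_set S le u) \<union> up_set S le j"
      proof (cases "le x v")
        case True then show ?thesis using P[OF vS True uv] vS unfolding up_set_def by auto
      next
        case False
        have "\<not> le v x" using trans[OF uS vS xS uv] uI I_def by auto
        then show ?thesis using False v vS I_def by auto
      qed
    qed
    then have "card (up_set S le u) \<le> card ((I \<inter> up_set S le u) \<union> up_set S le j)"
      using finS by (intro card_mono) (auto simp: up_set_def)
    also have "\<dots> \<le> card (I \<inter> up_set S le u) + card (up_set S le j)" by (rule card_Un_le)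
    finally show ?thesis .
  qed
  have cIu: "card (I \<inter> up_set S le u) \<le> 2" for u
    using card_mono[OF finI, of "I \<inter> up_set S le u"] I2 by auto
  have cI1: "card I \<ge> 1" using yI finI by (metis One_nat_def Suc_leI card_gt_0_iff empty_iff)
  have cI2: "card I \<ge> 2" if "w \<in> I" "w \<noteq> y" for w
  proof -
    have "card {y, w} \<le> card I" using that yI finI by (intro card_mono) auto
    then show ?thesis using that by simp
  qed
  have IS: "\<And>u. u \<in> I \<Longrightarrow> u \<in> S" and Inx: "\<And>u. u \<in> I \<Longrightarrow> \<not> le x u" and Iux: "\<And>u. u\<in>I \<Longrightarrow> \<not> le u x"
    unfolding I_def by auto
  have classify: "v \<in> A \<or> v \<in> B \<or> v \<in> I" if "v \<in> S" for v
    using that A_def B_def I_def by auto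
  show False
  proof (cases "join_irreducible S le y")
    case yJI: True
    show False
    proof (cases "\<exists>w\<in>I. w \<noteq> y \<and> le y w")
      case False
      have "I \<inter> up_set S le y \<subseteq> {y}" using False unfolding up_set_def by auto
      then have "card (I \<inter> up_set S le y) \<le> 1" using card_mono[of "{y}"] by fastforce
      then have "card (up_set S le y) \<le> 1 + card (up_set S le j)"
        using upbound[OF yI jlub] by simp
      then show False using CE[OF yS yJI] upj cardsum A2 cI1 by simp
    next
      case True
      then obtain w where wI: "w \<in> I" and wy: "w \<noteq> y" and yw: "le y w" by auto
      have wS: "w \<in> S" using wI IS by auto
      have cI: "card I \<ge> 2" using cI2[OF wI wy] .
      show False
      proof (cases "card A \<ge> 3")
        case True
        have "card (up_set S le y) \<le> 2 + card (up_set S le j)"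
          using upbound[OF yI jlub] cIu[of y] by simp
        then show False using CE[OF yS yJI] upj cardsum True cI by simp
      next
        case A3f: False
        show False
        proof (cases "join_irreducible S le w")
          case wJI: True
          have Pw: "\<And>v. v\<in>S \<Longrightarrow> le x v \<Longrightarrow> le w v \<Longrightarrow> le j v"
            using jlub trans[OF yS wS] yw by blast
          have "I \<inter> up_set S le w \<subseteq> I - {y}"
            using anti[OF yS wS yw] wy unfolding up_set_def by auto
          then have "card (I \<inter> up_set S le w) \<le> card (I - {y})" using finI by (intro card_mono) auto
          also have "\<dots> = card I - 1" using yI finI by simp
          finally have "card (up_set S le w) \<le> 1 + card (up_set S le j)"
            using upbound[OF wI Pw] I2 by simp
          then show False using CE[OF wS wJI] upj cardsum A2 cI by simp
        next
          case wnJI: False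
          define d where "d = glb x w"
          have dS: "d \<in> S" and dx: "le d x" and dw: "le d w" using glbS glb1 glb2 xS wS d_def by auto
          define e where "e = lub y d"
          have eS: "e \<in> S" and ye: "le y e" and de: "le d e" using lubS lub1 lub2 yS dS e_def by auto
          have ew: "le e w" using lubl[OF yS dS wS yw dw] e_def by simp
          have "e = w"
          proof (rule ccontr)
            assume enw: "e \<noteq> w"
            have "join_irreducible S le w"
            proof (rule ji_crit[of S le w e, OF antiA wS eS ew enw], intro ballI impI)
              fix v assume vS: "v \<in> S" and vw: "le v w \<and> v \<noteq> w"
              show "le v e"
              proof -
                have "v \<in> A \<or> v \<in> B \<or> v \<in> I" by (rule classify[OF vS])
                moreover
                { assume "v \<in> A"
                  then have "le v d" using glbl[OF xS wS vS] vw d_def A_def by auto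
                  then have ?thesis using trans[OF vS dS eS] de by auto }
                moreover
                { assume "v \<in> B" then have ?thesis using trans[OF xS vS wS] vw Inx[OF wI] B_def by auto }
                moreover
                { assume vI: "v \<in> I"
                  then have "v = y" using three[OF vI yI wI] vw wy by auto
                  then have ?thesis using ye by simp }
                ultimately show ?thesis by blast
              qed
            qed
            then show False using wnJI by simp
          qed
          have ndy: "\<not> le d y"
          proof
            assume "le d y"
            then have "le e y" using lubl[OF yS dS yS refl[OF yS]] e_def by simp
            then have "e = y" using anti[OF eS yS] ye by simp
            then show False using \<open>e = w\<close> wy by simp
          qed
          have "d \<noteq> bot" using ndy botp yS by auto
          moreover have "d \<noteq> x" using dw Inx[OF wI] by auto
          moreover have "d \<in> A" "bot \<in> A" "x \<in> A" using dS dx botp xS refl A_def by auto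
          ultimately have "card A \<ge> 3" using A3[of bot d x] xbot by auto
          then show False using A3f by simp
        qed
      qed
    qed
  next
    case ynJI: False
    define d where "d = glb x y"
    have dS: "d \<in> S" and dx: "le d x" and dy: "le d y" using glbS glb1 glb2 xS yS d_def by auto
    have "\<exists>w\<in>I. w \<noteq> y \<and> le w y"
    proof (rule ccontr)
      assume nw: "\<not> (\<exists>w\<in>I. w \<noteq> y \<and> le w y)"
      have dny: "d \<noteq> y" using dx nyx by auto
      have "join_irreducible S le y"
      proof (rule ji_crit[of S le y d, OF antiA yS dS dy dny], intro ballI impI)
        fix v assume vS: "v \<in> S" and vy: "le v y \<and> v \<noteq> y"
        have "v \<in> A \<or> v \<in> B \<or> v \<in> I" by (rule classify[OF vS])
        moreover have "v \<notin> B" using trans[OF xS vS yS] vy nxy B_def by auto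
        moreover have "v \<notin> I" using nw vy by auto
        ultimately have "v \<in> A" by blast
        then show "le v d" using glbl[OF xS yS vS] vy d_def A_def by auto
      qed
      then show False using ynJI by simp
    qed
    then obtain w where wI: "w \<in> I" and wy: "w \<noteq> y" and wley: "le w y" by auto
    have wS: "w \<in> S" using wI IS by auto
    have cI: "card I \<ge> 2" using cI2[OF wI wy] .
    define dw where "dw = glb x w"
    have dwS: "dw \<in> S" and dwx: "le dw x" and dww: "le dw w" using glbS glb1 glb2 xS wS dw_def by auto
    have wJI: "join_irreducible S le w"
    proof (rule ji_crit[of S le w dw, OF antiA wS dwS dww], use Iux[OF wI] dwx in blast, intro ballI impI)
      fix v assume vS: "v \<in> S" and vw: "le v w \<and> v \<noteq> w"
      have "v \<in> A \<or> v \<in> B \<or> v \<in> I" by (rule classify[OF vS])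
      moreover have "v \<notin> B" using trans[OF xS vS wS] vw Inx[OF wI] B_def by auto
      moreover have "v \<notin> I"
      proof
        assume vI: "v \<in> I"
        show False
        proof (cases "v = y")
          case True then show False using anti[OF wS yS wley] vw wy by auto
        next
          case False then show False using three[OF vI yI wI] vw wy by auto
        qed
      qed
      ultimately have "v \<in> A" by blast
      then show "le v dw" using glbl[OF xS wS vS] vw dw_def A_def by auto
    qed
    define e where "e = lub w d"
    have eS: "e \<in> S" and we: "le w e" and de: "le d e" using lubS lub1 lub2 wS dS e_def by auto
    have ey: "le e y" using lubl[OF wS dS yS wley dy] e_def by simp
    have "e = y"
    proof (rule ccontr)
      assume eny: "e \<noteq> y"
      have "join_irreducible S le y"
      proof (rule ji_crit[of S le y e, OF antiA yS eS ey eny], intro ballI impI)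
        fix v assume vS: "v \<in> S" and vy: "le v y \<and> v \<noteq> y"
        have "v \<in> A \<or> v \<in> B \<or> v \<in> I" by (rule classify[OF vS])
        moreover
        { assume "v \<in> A"
          then have "le v d" using glbl[OF xS yS vS] vy d_def A_def by auto
          then have "le v e" using trans[OF vS dS eS] de by auto }
        moreover
        { assume "v \<in> B" then have "le v e" using trans[OF xS vS yS] vy nxy B_def by auto }
        moreover
        { assume vI: "v \<in> I"
          then have "v = w" using three[OF vI yI wI] vy wy by auto
          then have "le v e" using we by simp }
        ultimately show "le v e" by blast
      qed
      then show False using ynJI by simp
    qed
    have ndw: "\<not> le d w"
    proof
      assume "le d w"
      then have "le e w" using lubl[OF wS dS wS refl[OF wS]] e_def by simp
      then have "e = w" using anti[OF eS wS] we by simp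
      then show False using \<open>e = y\<close> wy by simp
    qed
    have "d \<noteq> bot" using ndw botp wS by auto
    moreover have "d \<noteq> x" using dy nxy by auto
    moreover have "d \<in> A" "bot \<in> A" "x \<in> A" using dS dx botp xS refl A_def by auto
    ultimately have A3': "card A \<ge> 3" using A3[of bot d x] xbot by auto
    have Pw: "\<And>v. v\<in>S \<Longrightarrow> le x v \<Longrightarrow> le w v \<Longrightarrow> le j v"
    proof -
      fix v assume vS: "v\<in>S" and xv: "le x v" and wv: "le w v"
      have "le d v" using trans[OF dS xS vS dx xv] .
      then have "le e v" using lubl[OF wS dS vS wv] e_def by simp
      then have "le y v" using \<open>e = y\<close> by simp
      then show "le j v" using jlub[OF vS xv] by simp
    qed
    have "card (up_set S le w) \<le> 2 + card (up_set S le j)"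
      using upbound[OF wI Pw] cIu[of w] by simp
    then show False using CE[OF wS wJI] upj cardsum A3' cI by simp
  qed
qed

end
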